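(* Let $F(x)=\frac{1-x-\sqrt{1-2x-3x^2}}{2x^2}$ be the generating function of the Motzkin numbers $a_n=\sum_{i\ge0}\frac{1}{i+1}\binom{n}{2i}\binom{2i}{i}$. Let $k$ be a positive integer and $m\in\mathbb{N}$. Then $D_{2k,1-2k-m}(N)=0$ for $N=1,\dots,m+2k-1$, and $D_{2k,1-2k-m}(n+m+2k)=(-1)^{\binom{m+2k}{2}}D_{2k,1-2k+m}(n)$ for all $n\in\mathbb{N}$; $D_{2k-1,2-2k-m}(N)=0$ for $N=1,\dots,m+2k-2$, and $D_{2k-1,2-2k-m}(n+m+2k-1)=(-1)^{\binom{m+2k-1}{2}}D_{2k-1,2-2k+m}(n)$ for all $n\in\mathbb{N}$.
   Context: For a power series $F(x)=\sum_{n\ge0}a_nx^n$ and $K\ge1$, write $F(x)^K=\sum_{n\ge0}a_{K,n}x^n$ and set $a_{K,n}=0$ for $n<0$. For $M\in\mathbb{Z}$ and $K,N\in\mathbb{N}$ with $K\ge1$, define the shifted Hankel determinant $D_{K,M}(N)=\det(a_{K,i+j+M})_{i,j=0}^{N-1}$, with $D_{K,M}(0)=1$. $\mathbb{N}=\{0,1,2,\dots\}$. *)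

theory Defs
  imports "HOL-Computational_Algebra.Formal_Power_Series" "Jordan_Normal_Form.Determinant"
begin

definition motzkin :: "nat \<Rightarrow> rat" where
  "motzkin n = (\<Sum>i\<le>n. of_nat (n choose (2*i)) * of_nat ((2*i) choose i) / of_nat (i+1))"

definition motzkin_fps :: "rat fps" where
  "motzkin_fps = Abs_fps motzkin"

definition aK :: "nat \<Rightarrow> int \<Rightarrow> rat" where
  "aK K n = (if n < 0 then 0 else fps_nth (motzkin_fps ^ K) (nat n))"

text \<open>Shifted Hankel determinant D_{K,M}(N) = det(a_{K,i+j+M})_{i,j=0}^{N-1}; det of 0x0 matrix is 1.\<close>
definition hankelD :: "nat \<Rightarrow> int \<Rightarrow> nat \<Rightarrow> rat" where
  "hankelD K M N = det (mat N N (\<lambda>(i,j). aK K (int i + int j + M)))"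

end

theory Submission
  imports Defs
begin

no_notation vec_index (infixl "$" 100)
notation fps_nth (infixl "$" 75)


definition cat :: "nat \<Rightarrow> rat" where "cat n = of_nat ((2*n) choose n) / of_nat (n+1)"
definition catf :: "rat fps" where "catf = Abs_fps cat"

lemma cat_fact: "cat n = fact (2*n) / (fact n * fact (Suc n))"
proof -
  have a: "(of_nat ((2*n) choose n) :: rat) = fact (2*n) / (fact n * fact n)"
    using binomial_fact[of n "2*n"] by simp
  have "fact (Suc n) = (of_nat (Suc n) :: rat) * fact n" by (simp add: fact_Suc)
  then show ?thesis unfolding cat_def a by (simp add: field_simps)
qed

lemma cat_aux: "(a::rat) \<noteq> 0 \<Longrightarrow> b \<noteq> 0 \<Longrightarrow> f \<noteq> 0 \<Longrightarrow>
   (2*a)*c*g/((a*f)*((b*a)*f)) = g/(f*(a*f)) * (2*c/b)"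
  by (simp add: field_simps)

lemma cat_Suc: "cat (Suc n) = cat n * (2*(2*of_nat n+1)/(of_nat n+2))"
proof -
  have f1: "fact (2 * Suc n) = (2*(of_nat n+1) * (2*of_nat n+1) :: rat) * fact (2*n)"
    by (simp add: fact_Suc algebra_simps)
  have f2: "fact (Suc (Suc n)) = ((of_nat n+2) * (of_nat n+1) :: rat) * fact n"
    by (simp add: fact_Suc algebra_simps)
  have f3: "fact (Suc n) = (of_nat n+1 :: rat) * fact n"
    by (simp add: fact_Suc)
  have nz: "(fact n :: rat) \<noteq> 0" "(of_nat n + 1 :: rat) \<noteq> 0" "(of_nat n + 2 :: rat) \<noteq> 0"
    by simp_all
  show ?thesis unfolding cat_fact f1 f2 f3 using cat_aux[OF nz(2,3,1)] by simp
qed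

definition hb :: "nat \<Rightarrow> rat" where "hb n = ((1/2::rat) gchoose n) * (-4)^n"

lemma gch_Suc: "(a::rat) gchoose (Suc k) = (a - of_nat k) * (a gchoose k) / of_nat (Suc k)"
  using gbinomial_mult_1[of a k] by (simp add: field_simps)

lemma hb_Suc: "hb (Suc n) = -2 * cat n"
proof (induction n)
  case 0
  then show ?case by (simp add: hb_def cat_def)
next
  case (Suc n)
  have "hb (Suc (Suc n)) = hb (Suc n) * (-4) * (1/2 - of_nat (Suc n)) / of_nat (Suc (Suc n))"
    unfolding hb_def gch_Suc[of _ "Suc n"] by (simp add: field_simps)
  also have "\<dots> = -2 * cat (Suc n)" unfolding Suc cat_Suc
    by (simp add: field_simps; simp add: algebra_simps)
  finally show ?case .
qed

lemma hb_0: "hb 0 = 1" by (simp add: hb_def)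

definition Sf :: "rat fps" where "Sf = Abs_fps hb"

lemma Sf_sq: "Sf * Sf = 1 - 4 * fps_X"
proof (rule fps_ext)
  fix n
  have "(Sf * Sf) $ n = (\<Sum>i=0..n. hb i * hb (n - i))" by (simp add: fps_mult_nth Sf_def)
  also have "\<dots> = (-4)^n * (\<Sum>i=0..n. ((1/2::rat) gchoose i) * ((1/2) gchoose (n-i)))"
    unfolding hb_def sum_distrib_left
    by (rule sum.cong) (auto simp: power_add[symmetric])
  also have "(\<Sum>i=0..n. ((1/2::rat) gchoose i) * ((1/2) gchoose (n-i))) = (fps_binomial (1/2) * fps_binomial (1/2)) $ n"
    by (simp add: fps_mult_nth)
  also have "fps_binomial (1/2) * fps_binomial (1/2) = fps_binomial (1::rat)"
    using fps_binomial_add_mult[of "1/2::rat" "1/2"] by simp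
  also have "fps_binomial (1::rat) $ n = of_nat (1 choose n)"
    using binomial_gbinomial[of 1 n, where 'a=rat] by simp
  finally show "(Sf * Sf) $ n = (1 - 4 * fps_X) $ n"
    by (cases n) (auto simp: binomial_eq_0 numeral_fps_const)
qed

lemma Sf_eq: "Sf = 1 - 2 * (fps_X * catf)"
proof (rule fps_ext)
  fix n show "Sf $ n = (1 - 2 * (fps_X * catf)) $ n"
    by (cases n) (auto simp: Sf_def hb_Suc catf_def hb_0 numeral_fps_const)
qed

lemma catf_eq: "catf = 1 + fps_X * catf^2"
proof -
  define E where "E = catf - 1 - fps_X * catf^2"
  have "4 * fps_X * E = (1 - 4*fps_X) - (1 - 2*(fps_X*catf))*(1 - 2*(fps_X*catf))"
    by (simp add: E_def algebra_simps power2_eq_square)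
  also have "\<dots> = 0" using Sf_sq unfolding Sf_eq by simp
  finally have "4 * fps_X * E = 0" .
  then have "E = 0" by simp
  then show ?thesis unfolding E_def by (simp add: algebra_simps)
qed


definition Df :: "rat fps" where "Df = Abs_fps (\<lambda>_. 1)"

lemma Df_nth: "Df $ m = 1" by (simp add: Df_def)

lemma Df_inv: "(1 - fps_X) * Df = 1"
proof (rule fps_ext)
  fix n show "((1 - fps_X) * Df) $ n = (1::rat fps) $ n"
    by (cases n) (simp_all add: Df_def algebra_simps)
qed

lemma ch_sym: "(a + b) choose b = (b + a) choose a"
  using binomial_symmetric[of b "a+b"] by (simp add: add.commute)

lemma Df_pow: "(Df ^ Suc k) $ n = of_nat ((n + k) choose k)"
proof (induction k arbitrary: n)
  case 0
  then show ?case by (simp add: Df_def)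
next
  case (Suc k)
  have "(Df ^ Suc (Suc k)) $ n = (Df ^ Suc k * Df) $ n" by (simp only: power_Suc2)
  also have "\<dots> = (\<Sum>i=0..n. of_nat ((i + k) choose k))"
    unfolding fps_mult_nth Suc Df_nth mult_1_right ..
  also have "\<dots> = (\<Sum>i\<le>n. of_nat ((k + i) choose i))"
    unfolding atLeast0AtMost by (rule sum.cong) (simp_all add: ch_sym)
  also have "\<dots> = of_nat (Suc (k + n) choose n)"
    by (simp only: of_nat_sum[symmetric] sum_choose_lower)
  also have "\<dots> = of_nat ((n + Suc k) choose Suc k)"
    using ch_sym[of n "Suc k"] by simp
  finally show ?case .
qed

definition Zf :: "rat fps" where "Zf = fps_X^2 * Df^2"

lemma Zf_0: "Zf $ 0 = 0" by (simp add: Zf_def)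

lemma Zf_pow: "Zf ^ i = fps_X ^ (2*i) * Df ^ (2*i)"
  by (simp add: Zf_def power_mult_distrib power_mult)

definition Gm :: "rat fps" where "Gm = catf oo Zf"

lemma Gm_eq: "Gm = 1 + Zf * Gm^2"
proof -
  have "Gm = (1 + fps_X * catf^2) oo Zf" unfolding Gm_def using catf_eq by (rule arg_cong)
  also have "\<dots> = 1 + Zf * Gm^2"
    by (simp add: fps_compose_add_distrib fps_compose_mult_distrib[OF Zf_0]
        fps_compose_power[OF Zf_0] Zf_0 Gm_def)
  finally show ?thesis .
qed

lemma motzkin_cat: "motzkin n = (\<Sum>i\<le>n. cat i * of_nat (n choose (2*i)))"
  unfolding motzkin_def cat_def by (rule sum.cong) auto

lemma term_nth: "(fps_X ^ (2*i) * Df ^ Suc (2*i)) $ n = of_nat (n choose (2*i))"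
  by (simp only: fps_X_power_mult_nth Df_pow) (auto simp: binomial_eq_0)

lemma motzkin_fps_eq: "motzkin_fps = Gm * Df"
proof (rule fps_ext)
  fix n
  define P where "P = (\<Sum>i\<le>n. fps_const (cat i) * Zf ^ i)"
  have ZP: "(Zf ^ i) $ m = 0" if "m < i" for i m
    unfolding Zf_pow fps_X_power_mult_nth using that by simp
  have GP: "Gm $ m = P $ m" if "m \<le> n" for m
  proof -
    have "Gm $ m = (\<Sum>i=0..m. cat i * (Zf^i) $ m)"
      by (simp add: Gm_def fps_compose_nth catf_def)
    also have "\<dots> = (\<Sum>i\<le>n. cat i * (Zf^i) $ m)"
      by (rule sum.mono_neutral_left) (use that ZP in auto)
    also have "\<dots> = P $ m" by (simp add: P_def fps_sum_nth)
    finally show ?thesis .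
  qed
  have "(Gm * Df) $ n = (P * Df) $ n"
    unfolding fps_mult_nth by (rule sum.cong) (auto simp: GP)
  also have "P * Df = (\<Sum>i\<le>n. fps_const (cat i) * (fps_X ^ (2*i) * Df ^ Suc (2*i)))"
    unfolding P_def sum_distrib_right Zf_pow by (rule sum.cong) (simp_all only: mult.assoc power_Suc2)
  also have "\<dots> $ n = (\<Sum>i\<le>n. cat i * of_nat (n choose (2*i)))"
    by (simp only: fps_sum_nth fps_mult_left_const_nth term_nth)
  also have "\<dots> = motzkin_fps $ n"
    by (simp add: motzkin_fps_def motzkin_cat)
  finally show "motzkin_fps $ n = (Gm * Df) $ n" by (rule sym)
qed

lemma motzkin_eq: "motzkin_fps = 1 + fps_X * motzkin_fps + fps_X^2 * motzkin_fps^2"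
proof -
  have "(1 - fps_X) * motzkin_fps = Gm"
  proof -
    have "(1 - fps_X) * (Gm * Df) = Gm * ((1 - fps_X) * Df)" by (simp only: mult_ac)
    then show ?thesis unfolding motzkin_fps_eq Df_inv by simp
  qed
  also have "\<dots> = 1 + fps_X^2 * motzkin_fps^2"
  proof -
    have "Zf * Gm^2 = fps_X^2 * motzkin_fps^2"
      unfolding Zf_def motzkin_fps_eq by (simp only: power_mult_distrib mult_ac)
    then show ?thesis by (subst Gm_eq) simp
  qed
  finally have "motzkin_fps - fps_X * motzkin_fps = 1 + fps_X^2 * motzkin_fps^2"
    by (simp add: left_diff_distrib)
  then show ?thesis by (simp add: algebra_simps)
qed



abbreviation "Fm \<equiv> motzkin_fps"

lemma Fm0: "Fm $ 0 = 1"
  by (simp add: motzkin_fps_def motzkin_def)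

lemma ab_aux:
  fixes a f x :: "'a::comm_ring_1"
  assumes h1: "a*f = 1" and h2: "f = 1 + x*f + x^2*f^2"
  shows "a + x^2*f = 1 - x"
proof -
  have "a*f = a + x*(a*f) + x^2*f*(a*f)"
    by (subst (1) h2) (simp add: algebra_simps power2_eq_square)
  then show ?thesis using h1 by (simp add: algebra_simps)
qed

definition al :: "rat fps" where "al = inverse Fm"
definition be :: "rat fps" where "be = fps_X^2 * Fm"

lemma alF: "al * Fm = 1" unfolding al_def by (rule inverse_mult_eq_1) (simp add: Fm0)

lemma ab_sum: "al + be = 1 - fps_X"
  unfolding be_def by (rule ab_aux[OF alF motzkin_eq])

lemma ab_prod: "al * be = fps_X^2"
  unfolding be_def using alF by (simp add: mult_ac)

definition pp :: "nat \<Rightarrow> rat fps" where "pp K = al^K + be^K"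

lemma pp_rec: "pp (Suc (Suc K)) = (1 - fps_X) * pp (Suc K) - fps_X^2 * pp K"
  unfolding pp_def ab_sum[symmetric] ab_prod[symmetric] by (simp add: algebra_simps)

lemma pp_deg: "(\<forall>n>K. pp K $ n = 0) \<and> (\<forall>n>Suc K. pp (Suc K) $ n = 0)"
proof (induction K)
  case 0
  have "pp 0 = 2" by (simp add: pp_def)
  moreover have "pp 1 = 1 - fps_X" by (simp add: pp_def ab_sum)
  ultimately show ?case by (auto simp: fps_numeral_nth)
next
  case (Suc K)
  have "pp (Suc (Suc K)) $ n = 0" if "n > Suc (Suc K)" for n
  proof -
    have "pp (Suc (Suc K)) $ n = pp (Suc K) $ n - pp (Suc K) $ (n - 1) - pp K $ (n - 2)"
    proof -
      have x2: "(fps_X^2 * pp K) $ n = pp K $ (n-2)" using fps_X_power_mult_nth[of 2 "pp K" n] that by simp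
      have x1: "((1 - fps_X) * pp (Suc K)) $ n = pp (Suc K) $ n - pp (Suc K) $ (n - 1)"
        using that by (simp add: left_diff_distrib)
      show ?thesis unfolding pp_rec fps_sub_nth x1 x2 ..
    qed
    also have "\<dots> = 0" using Suc that by simp
    finally show ?thesis .
  qed
  then show ?case using Suc by simp
qed

lemma inv_pow:
  assumes "n > K"
  shows "inverse (Fm ^ K) $ n = - (fps_X ^ (2*K) * Fm ^ K) $ n"
proof -
  have "inverse (Fm ^ K) = al ^ K" by (simp add: al_def fps_inverse_power)
  also have "al ^ K = pp K - fps_X ^ (2*K) * Fm ^ K"
    by (simp add: pp_def be_def power_mult_distrib power_mult)
  finally show ?thesis using pp_deg[of K] assms by simp
qed



lemma mult_entry:
  assumes "A \<in> carrier_mat n k" "B \<in> carrier_mat k m" "i < n" "j < m"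
  shows "(A * B) $$ (i,j) = (\<Sum>l<k. A $$ (i,l) * B $$ (l,j))"
  using assms by (simp add: scalar_prod_def lessThan_atLeast0)

lemma conv_low:
  fixes Q G :: "rat fps"
  assumes QG: "Q * G = 1"
  shows "(\<Sum>l=0..a. Q$(a-l) * (if l < d then 0 else G$(l-d))) = (if a = d then 1 else 0)"
proof (cases "a < d")
  case True
  then show ?thesis by (intro trans[OF sum.neutral]) auto
next
  case False
  have "(\<Sum>l=0..a. Q$(a-l) * (if l < d then 0 else G$(l-d))) = (\<Sum>l=d..a. Q$(a-l) * (if l < d then 0 else G$(l-d)))"
    by (rule sum.mono_neutral_right) auto
  also have "\<dots> = (\<Sum>l=d..a. Q$(a-l) * G$(l-d))" by (rule sum.cong) auto
  also have "\<dots> = (\<Sum>u=0..a-d. G$u * Q$(a-d-u))"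
    using sum.shift_bounds_cl_nat_ivl[of "\<lambda>l. Q$(a-l) * G$(l-d)" 0 d "a-d"] False by (simp add: mult.commute add.commute)
  also have "\<dots> = (G*Q) $ (a-d)" by (simp add: fps_mult_nth)
  finally show ?thesis using False QG by (simp add: mult.commute)
qed

lemma conv_high:
  fixes Q G :: "rat fps"
  assumes QG: "Q * G = 1" and e: "e \<ge> 1"
  shows "(\<Sum>l=0..a. Q$(a-l) * G$(l+e)) = - (\<Sum>u<e. G$u * Q$(a+e-u))"
proof -
  have "0 = (G*Q) $ (a+e)" using QG e by (simp add: mult.commute)
  also have "\<dots> = (\<Sum>w=0..<Suc (a+e). G$w * Q$(a+e-w))"
    by (simp add: fps_mult_nth atLeastLessThanSuc_atLeastAtMost)
  also have "\<dots> = (\<Sum>w=0..<e. G$w * Q$(a+e-w)) + (\<Sum>w=e..<Suc (a+e). G$w * Q$(a+e-w))"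
    by (rule sum.atLeastLessThan_concat[symmetric]) auto
  also have "(\<Sum>w=e..<Suc (a+e). G$w * Q$(a+e-w)) = (\<Sum>l=0..a. Q$(a-l) * G$(l+e))"
    using sum.shift_bounds_nat_ivl[of "\<lambda>w. G$w * Q$(a+e-w)" 0 e "Suc a"]
    by (simp add: atLeastLessThanSuc_atLeastAtMost add.commute mult.commute)
  finally show ?thesis by (simp add: lessThan_atLeast0 eq_neg_iff_add_eq_0 add.commute)
qed

definition revm :: "nat \<Rightarrow> rat mat" where
  "revm k = mat k k (\<lambda>(a,j). if a + j + 1 = k then 1 else 0)"

lemma det_revm: "det (revm k) = (-1) ^ (k choose 2)"
proof (induction k)
  case 0
  then show ?case by (simp add: revm_def binomial_eq_0)
next
  case (Suc k)
  have car: "revm (Suc k) \<in> carrier_mat (Suc k) (Suc k)" by (simp add: revm_def)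
  have del: "mat_delete (revm (Suc k)) 0 k = revm k"
    by (rule eq_matI) (auto simp: revm_def mat_delete_def)
  have "det (revm (Suc k)) = (\<Sum>j<Suc k. revm (Suc k) $$ (0,j) * cofactor (revm (Suc k)) 0 j)"
    by (rule laplace_expansion_row[OF car]) simp
  also have "\<dots> = (\<Sum>j<k. revm (Suc k) $$ (0,j) * cofactor (revm (Suc k)) 0 j) + cofactor (revm (Suc k)) 0 k"
    by (simp add: revm_def)
  also have "(\<Sum>j<k. revm (Suc k) $$ (0,j) * cofactor (revm (Suc k)) 0 j) = 0"
    by (rule sum.neutral) (simp add: revm_def)
  also have "cofactor (revm (Suc k)) 0 k = (-1)^k * (-1) ^ (k choose 2)"
    unfolding cofactor_def del Suc by simp
  also have "\<dots> = (-1) ^ (Suc k choose 2)"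
    by (simp add: power_add[symmetric] numeral_2_eq_2)
  finally show ?case by simp
qed

definition gz :: "rat fps \<Rightarrow> int \<Rightarrow> rat" where
  "gz G t = (if t < 0 then 0 else G $ nat t)"

lemma gz_nat: "gz G (int l + int j - int s) = (if l + j < s then 0 else G $ (l + j - s))"
proof (cases "l + j < s")
  case True then show ?thesis by (simp add: gz_def)
next
  case False then have e0: "int l + int j - int s = int (l + j - s)" by simp
  have e: "nat (int l + int j - int s) = l + j - s" unfolding e0 by (rule nat_int)
  show ?thesis unfolding gz_def e using False by simp
qed

lemma hankel_zero:
  assumes "1 \<le> N" "N \<le> s"
  shows "det (mat N N (\<lambda>(i,j). gz G (int i + int j - int s))) = 0"
proof -
  let ?A = "mat N N (\<lambda>(i,j). gz G (int i + int j - int s))"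
  have car: "?A \<in> carrier_mat N N" by simp
  have "det ?A = (\<Sum>j<N. ?A $$ (0,j) * cofactor ?A 0 j)"
    by (rule laplace_expansion_row[OF car]) (use assms in simp)
  also have "\<dots> = 0" by (rule sum.neutral) (use assms in \<open>auto simp: gz_def\<close>)
  finally show ?thesis .
qed


lemma prod_list_ones: "prod_list (map (\<lambda>i. (1::rat)) xs) = 1"
  by (induct xs) auto

lemma hankel_shift:
  fixes G :: "rat fps"
  assumes G0: "G $ 0 = 1"
  shows "det (mat (n+s+1) (n+s+1) (\<lambda>(i,j). gz G (int i + int j - int s)))
       = (-1)^((s+1) choose 2) * det (mat n n (\<lambda>(i,j). - (inverse G $ (i+j+s+2))))"
proof -
  define N where "N = n+s+1"
  define Q where "Q = inverse G"
  have QG: "Q * G = 1" unfolding Q_def by (rule inverse_mult_eq_1) (simp add: G0)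
  have "(Q*G) $ 0 = 1" using QG by simp
  then have Q0: "Q $ 0 = 1" using G0 by simp
  define M where "M = mat N N (\<lambda>(i,j). gz G (int i + int j - int s))"
  define L where "L = mat N N (\<lambda>(i,j). if j \<le> i then Q$(i-j) else 0)"
  have Mc: "M \<in> carrier_mat N N" and Lc: "L \<in> carrier_mat N N" by (simp_all add: M_def L_def)
  have "diag_mat L = map (\<lambda>i. 1) [0..<N]"
    unfolding diag_mat_def by (rule map_cong) (auto simp: L_def Q0)
  then have detL: "det L = 1"
    using det_lower_triangular[OF _ Lc] by (simp add: L_def prod_list_ones)
  have Pent: "(L*M) $$ (a,j) = (if j \<le> s then (if a + j = s then 1 else 0)
                 else - (\<Sum>u<j-s. G$u * Q$(a+(j-s)-u)))" if a: "a < N" and j: "j < N" for a j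
  proof -
    have "(L*M) $$ (a,j) = (\<Sum>l<N. L $$ (a,l) * M $$ (l,j))"
      by (rule mult_entry[OF Lc Mc a j])
    also have "\<dots> = (\<Sum>l<N. (if l \<le> a then Q$(a-l) else 0) * gz G (int l + int j - int s))"
      by (rule sum.cong) (use a j in \<open>auto simp: L_def M_def\<close>)
    also have "\<dots> = (\<Sum>l=0..a. (if l \<le> a then Q$(a-l) else 0) * gz G (int l + int j - int s))"
      by (rule sum.mono_neutral_right) (use a in auto)
    also have "\<dots> = (\<Sum>l=0..a. Q$(a-l) * gz G (int l + int j - int s))"
      by (rule sum.cong) auto
    finally have P1: "(L*M) $$ (a,j) = (\<Sum>l=0..a. Q$(a-l) * gz G (int l + int j - int s))" .
    show ?thesis
    proof (cases "j \<le> s")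
      case True
      have "(\<Sum>l=0..a. Q$(a-l) * gz G (int l + int j - int s))
          = (\<Sum>l=0..a. Q$(a-l) * (if l < s - j then 0 else G$(l-(s-j))))"
        by (rule sum.cong) (use True in \<open>auto simp: gz_nat\<close>)
      also have "\<dots> = (if a = s - j then 1 else 0)" by (rule conv_low[OF QG])
      finally show ?thesis using P1 True by auto
    next
      case False
      have "(\<Sum>l=0..a. Q$(a-l) * gz G (int l + int j - int s))
          = (\<Sum>l=0..a. Q$(a-l) * G$(l+(j-s)))"
        by (rule sum.cong) (use False in \<open>auto simp: gz_nat\<close>)
      also have "\<dots> = - (\<Sum>u<j-s. G$u * Q$(a+(j-s)-u))"
        by (rule conv_high[OF QG]) (use False in auto)
      finally show ?thesis using P1 False by auto
    qed
  qed
  define R where "R = revm (s+1)"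
  define B where "B = mat (s+1) n (\<lambda>(a,j). (L*M) $$ (a, j+s+1))"
  define E where "E = mat n n (\<lambda>(i,j). (L*M) $$ (i+s+1, j+s+1))"
  have Rc: "R \<in> carrier_mat (s+1) (s+1)" by (simp add: R_def revm_def)
  have Bc: "B \<in> carrier_mat (s+1) n" by (simp add: B_def)
  have Ec: "E \<in> carrier_mat n n" by (simp add: E_def)
  have PB: "L*M = four_block_mat R B (0\<^sub>m n (s+1)) E"
  proof (rule eq_matI)
    fix i j
    assume "i < dim_row (four_block_mat R B (0\<^sub>m n (s+1)) E)" "j < dim_col (four_block_mat R B (0\<^sub>m n (s+1)) E)"
    then have i: "i < N" and j: "j < N" using Rc Ec by (auto simp: N_def)
    show "(L*M) $$ (i,j) = four_block_mat R B (0\<^sub>m n (s+1)) E $$ (i,j)"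
      using i j Rc Ec
      by (cases "i < s+1"; cases "j < s+1") (auto simp: Pent R_def revm_def B_def E_def N_def)
  qed (use Rc Ec Lc Mc in \<open>auto simp: N_def\<close>)
  have detP: "det (L*M) = det R * det E"
    unfolding PB by (rule det_four_block_mat_lower_left_zero[OF Rc Bc refl Ec])
  define H where "H = mat n n (\<lambda>(i,j). - (Q $ (i+j+s+2)))"
  define U where "U = mat n n (\<lambda>(t,j). if t \<le> j then G$(j-t) else 0)"
  have Hc: "H \<in> carrier_mat n n" and Uc: "U \<in> carrier_mat n n" by (simp_all add: H_def U_def)
  have EHU: "E = H * U"
  proof (rule eq_matI)
    fix i j assume "i < dim_row (H*U)" "j < dim_col (H*U)"
    then have i: "i < n" and j: "j < n" using Hc Uc by auto
    have "(H*U) $$ (i,j) = (\<Sum>t<n. H $$ (i,t) * U $$ (t,j))" by (rule mult_entry[OF Hc Uc i j])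
    also have "\<dots> = (\<Sum>t<n. (if t \<le> j then - (Q $ (i+t+s+2) * G$(j-t)) else 0))"
      by (rule sum.cong) (use i j in \<open>auto simp: H_def U_def\<close>)
    also have "\<dots> = (\<Sum>t=0..j. (if t \<le> j then - (Q $ (i+t+s+2) * G$(j-t)) else 0))"
      by (rule sum.mono_neutral_right) (use j in auto)
    also have "\<dots> = (\<Sum>t=0..j. - (Q $ (i+t+s+2) * G$(j-t)))" by (rule sum.cong) auto
    also have "\<dots> = (\<Sum>t=0..j. - (Q $ (i+(j-t)+s+2) * G$(j-(j-t))))"
      using sum.atLeastAtMost_rev[of "\<lambda>t. - (Q $ (i+t+s+2) * G$(j-t))" 0 j] by simp
    also have "\<dots> = (\<Sum>t=0..j. - (Q $ (i+j+s+2-t) * G$t))"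
    proof (rule sum.cong[OF refl])
      fix t assume "t \<in> {0..j}"
      then have "i+(j-t)+s+2 = i+j+s+2-t" "j-(j-t) = t" by auto
      then show "- (Q $ (i+(j-t)+s+2) * G$(j-(j-t))) = - (Q $ (i+j+s+2-t) * G$t)" by (simp only:)
    qed
    also have "\<dots> = - (\<Sum>u<j+1. G$u * Q$(i+s+1+(j+1)-u))"
    proof -
      have idx: "i+s+1+(j+1) = i+j+s+2" by simp
      have st: "{..<j+1} = {0..j}" by auto
      show ?thesis unfolding idx st by (simp add: sum_negf mult.commute)
    qed
    also have "\<dots> = E $$ (i,j)"
      using i j by (simp add: E_def Pent N_def)
    finally show "E $$ (i,j) = (H*U) $$ (i,j)" by simp
  qed (use Hc Uc Ec in auto)
  have "diag_mat U = map (\<lambda>i. 1) [0..<n]"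
    unfolding diag_mat_def by (rule map_cong) (auto simp: U_def G0)
  moreover have "upper_triangular U" by (auto simp: upper_triangular_def U_def)
  ultimately have detU: "det U = 1" using det_upper_triangular[OF _ Uc] by (simp add: prod_list_ones)
  have "det M = det (L*M)" using det_mult[OF Lc Mc] detL by simp
  also have "\<dots> = (-1)^((s+1) choose 2) * det H"
    unfolding detP EHU det_mult[OF Hc Uc] detU R_def det_revm by simp
  finally show ?thesis unfolding M_def N_def H_def Q_def .
qed


lemma Fm_pow0: "(Fm ^ K) $ 0 = 1"
  by (induct K) (simp_all add: Fm0)

lemma hk_gz: "hankelD K (- int s) N = det (mat N N (\<lambda>(i,j). gz (Fm^K) (int i + int j - int s)))"
  unfolding hankelD_def aK_def gz_def diff_conv_add_uminus by (rule refl)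

lemma main_gen:
  fixes K s :: nat
  assumes K1: "K \<ge> 1" and Ks: "K \<le> s + 1"
  shows "(\<forall>N. 1 \<le> N \<and> N \<le> s \<longrightarrow> hankelD K (- int s) N = 0)
       \<and> (\<forall>n. hankelD K (- int s) (n+s+1) = (-1)^((s+1) choose 2) * hankelD K (int s + 2 - 2*int K) n)"
proof (intro conjI allI impI)
  fix N assume "1 \<le> N \<and> N \<le> s"
  then show "hankelD K (- int s) N = 0" unfolding hk_gz by (intro hankel_zero) auto
next
  fix n
  have H: "mat n n (\<lambda>(i,j). - (inverse (Fm^K) $ (i+j+s+2)))
        = mat n n (\<lambda>(i,j). aK K (int i + int j + (int s + 2 - 2*int K)))"
  proof (rule eq_matI)
    fix i j assume "i < dim_row (mat n n (\<lambda>(i,j). aK K (int i + int j + (int s + 2 - 2*int K))))"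
      "j < dim_col (mat n n (\<lambda>(i,j). aK K (int i + int j + (int s + 2 - 2*int K))))"
    then have i: "i < n" and j: "j < n" by auto
    have gt: "i+j+s+2 > K" using Ks by simp
    have "- (inverse (Fm^K) $ (i+j+s+2)) = (fps_X ^ (2*K) * Fm ^ K) $ (i+j+s+2)"
      using inv_pow[OF gt] by simp
    also have "\<dots> = aK K (int i + int j + (int s + 2 - 2*int K))"
    proof (cases "i+j+s+2 < 2*K")
      case True
      then show ?thesis by (simp add: fps_X_power_mult_nth aK_def)
    next
      case False
      then have e0: "int i + int j + (int s + 2 - 2*int K) = int (i+j+s+2-2*K)" by simp
      have e1: "nat (int i + int j + (int s + 2 - 2*int K)) = i+j+s+2-2*K" unfolding e0 by (rule nat_int)
      have e2: "\<not> (int i + int j + (int s + 2 - 2*int K) < 0)" unfolding e0 by simp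
      have "aK K (int i + int j + (int s + 2 - 2*int K)) = (Fm ^ K) $ (i+j+s+2-2*K)"
        unfolding aK_def using e1 e2 by simp
      then show ?thesis using False by (simp add: fps_X_power_mult_nth)
    qed
    finally show "mat n n (\<lambda>(i,j). - (inverse (Fm^K) $ (i+j+s+2))) $$ (i,j)
        = mat n n (\<lambda>(i,j). aK K (int i + int j + (int s + 2 - 2*int K))) $$ (i,j)"
      using i j by simp
  qed auto
  show "hankelD K (- int s) (n+s+1) = (-1)^((s+1) choose 2) * hankelD K (int s + 2 - 2*int K) n"
  proof -
    have "hankelD K (- int s) (n+s+1) = det (mat (n+s+1) (n+s+1) (\<lambda>(i,j). gz (Fm^K) (int i + int j - int s)))"
      by (rule hk_gz)
    also have "\<dots> = (-1)^((s+1) choose 2) * det (mat n n (\<lambda>(i,j). - (inverse (Fm^K) $ (i+j+s+2))))"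
      by (rule hankel_shift[OF Fm_pow0])
    also have "\<dots> = (-1)^((s+1) choose 2) * hankelD K (int s + 2 - 2*int K) n"
      unfolding H hankelD_def ..
    finally show ?thesis .
  qed
qed

theorem corollary3p2:
  fixes k m :: nat
  assumes "k \<ge> 1"
  shows "(\<forall>N. 1 \<le> N \<and> N \<le> m + 2*k - 1 \<longrightarrow> hankelD (2*k) (1 - 2*int k - int m) N = 0)
       \<and> (\<forall>n. hankelD (2*k) (1 - 2*int k - int m) (n + m + 2*k)
              = (-1) ^ ((m + 2*k) choose 2) * hankelD (2*k) (1 - 2*int k + int m) n)
       \<and> (\<forall>N. 1 \<le> N \<and> N \<le> m + 2*k - 2 \<longrightarrow> hankelD (2*k - 1) (2 - 2*int k - int m) N = 0)
       \<and> (\<forall>n. hankelD (2*k - 1) (2 - 2*int k - int m) (n + m + 2*k - 1)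
              = (-1) ^ ((m + 2*k - 1) choose 2) * hankelD (2*k - 1) (2 - 2*int k + int m) n)"
proof -
  have A: "(\<forall>N. 1 \<le> N \<and> N \<le> m+2*k-1 \<longrightarrow> hankelD (2*k) (- int (m+2*k-1)) N = 0)
       \<and> (\<forall>n. hankelD (2*k) (- int (m+2*k-1)) (n+(m+2*k-1)+1) = (-1)^((m+2*k-1+1) choose 2) * hankelD (2*k) (int (m+2*k-1) + 2 - 2*int (2*k)) n)"
    by (rule main_gen) (use assms in auto)
  have B: "(\<forall>N. 1 \<le> N \<and> N \<le> m+2*k-2 \<longrightarrow> hankelD (2*k-1) (- int (m+2*k-2)) N = 0)
       \<and> (\<forall>n. hankelD (2*k-1) (- int (m+2*k-2)) (n+(m+2*k-2)+1) = (-1)^((m+2*k-2+1) choose 2) * hankelD (2*k-1) (int (m+2*k-2) + 2 - 2*int (2*k-1)) n)"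
    by (rule main_gen) (use assms in auto)
  have a1: "- int (m+2*k-1) = 1 - 2*int k - int m" using assms by simp
  have a2: "int (m+2*k-1) + 2 - 2*int (2*k) = 1 - 2*int k + int m" using assms by simp
  have a3: "\<And>n. n+(m+2*k-1)+1 = n + m + 2*k" using assms by simp
  have a4: "m+2*k-1+1 = m+2*k" using assms by simp
  have b1: "- int (m+2*k-2) = 2 - 2*int k - int m" using assms by simp
  have b2: "int (m+2*k-2) + 2 - 2*int (2*k-1) = 2 - 2*int k + int m" using assms by simp
  have b3: "\<And>n. n+(m+2*k-2)+1 = n + m + 2*k - 1" using assms by simp
  have b4: "m+2*k-2+1 = m+2*k-1" using assms by simp
  show ?thesis using A B unfolding a1 a2 a3 a4 b1 b2 b3 b4 by blast
qed

end
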